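(* Let $\lambda,\mu\in\mathbb C$ with $\mu\ne\lambda$. There is a unique $\mathrm{osp}(2|2)$-equivariant quantization map $Q:\operatorname{gr}^{1/2}\mathcal D_{\lambda\mu}\to\mathcal D^{1/2}_{\lambda\mu}$, and it is given, for a homogeneous symbol $(F_1,F_2)$ of parity $p(F)$, by $$Q(F_1,F_2)=F_1\overline D_1+F_2\overline D_2+(-1)^{p(F)}\frac{\lambda}{\lambda-\mu}\big(\overline D_1(F_1)+\overline D_2(F_2)\big).$$
   Context: $C^\infty(S^{1|2})$ consists of $f=f_0(x)+\xi_1f_1(x)+\xi_2f_2(x)+\xi_1\xi_2f_{12}(x)$ with smooth complex-valued coefficients on the circle and odd Grassmann variables $\xi_1,\xi_2$; parity $p(x)=0,p(\xi_i)=1$; $f'=\partial_xf$. $\overline D_i=\partial_{\xi_i}-\xi_i\partial_x$. For homogeneous $f$, $X_f=f\partial_x-(-1)^{p(f)}\tfrac12(\overline D_1(f)\overline D_1+\overline D_2(f)\overline D_2)$; $\mathcal K(2)$ is the Lie superalgebra of all such $X_f$, and $\mathrm{osp}(2|2)$ is spanned by $X_f$ for $f\in\{1,x,x^2,\xi_1\xi_2,\xi_1,\xi_2,x\xi_1,x\xi_2\}$. $\mathcal F_\lambda$ is $C^\infty(S^{1|2})$ with action $L^\lambda_{X_f}=X_f+\lambda f'$. $\mathcal D_{\lambda\mu}$: linear differential operators $\mathcal F_\lambda\to\mathcal F_\mu$ with action $\mathcal L_{X_f}(A)=L^\mu_{X_f}\circ A-(-1)^{p(f)p(A)}A\circ L^\lambda_{X_f}$;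 each is a finite sum $\sum a_{\ell,m,n}\partial_x^\ell\overline D_1^m\overline D_2^n$, $m,n\in\{0,1\}$. $\mathcal D^{1/2}_{\lambda\mu}$ consists of operators $a+b_1\overline D_1+b_2\overline D_2$ with functions $a,b_1,b_2$, and $\operatorname{gr}^{1/2}\mathcal D_{\lambda\mu}=\mathcal D^{1/2}_{\lambda\mu}/\mathcal D^0_{\lambda\mu}$ (with $\mathcal D^0_{\lambda\mu}$ the multiplication operators), whose elements (principal symbols) are identified with pairs $(F_1,F_2)$ = coefficients of $\overline D_1,\overline D_2$; the induced action is $L_{X_f}(F_1,F_2)=(L^{\mu-\lambda-1/2}_{X_f}F_1-\tfrac12\overline D_1\overline D_2(f)F_2,\ L^{\mu-\lambda-1/2}_{X_f}F_2+\tfrac12\overline D_1\overline D_2(f)F_1)$. Symbols are taken homogeneous with $p(F):=p(F_1)=p(F_2)$. A quantization map is a linear map $Q$ (given by a differential expression in $F_1,F_2$) from symbols to operators with $\sigma_{pr}\circ Q=\mathrm{id}$, $\sigma_{pr}$ the principal symbol projection. In the formula, $G\,B$ for a function $G$ and operator $B$ means multiplication by $G$ followed by... i.e. the operator $u\mapsto G\cdot B(u)$; $\overline D_i(F)$ denotes the function obtained by applying $\overline D_i$ to $F$. *)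

theory Defs
  imports "HOL-Analysis.Analysis" "HOL-Library.Function_Algebras"
begin

text \<open>Superfunctions on R^{1|2}: f = f0 + xi1 f1 + xi2 f2 + xi1 xi2 f12 is encoded as a map
  from the index (a,b) (meaning xi1^a xi2^b) to the complex-valued coefficient function.\<close>

type_synonym sfun = "bool \<times> bool \<Rightarrow> real \<Rightarrow> complex"

definition mk :: "(real \<Rightarrow> complex) \<Rightarrow> (real \<Rightarrow> complex) \<Rightarrow> (real \<Rightarrow> complex) \<Rightarrow> (real \<Rightarrow> complex) \<Rightarrow> sfun" where
  "mk a b c d = (\<lambda>(i, j). if i then (if j then d else b) else (if j then c else a))"

abbreviation c0 :: "sfun \<Rightarrow> real \<Rightarrow> complex" where "c0 f \<equiv> f (False, False)"
abbreviation c1 :: "sfun \<Rightarrow> real \<Rightarrow> complex" where "c1 f \<equiv> f (True, False)"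
abbreviation c2 :: "sfun \<Rightarrow> real \<Rightarrow> complex" where "c2 f \<equiv> f (False, True)"
abbreviation c12 :: "sfun \<Rightarrow> real \<Rightarrow> complex" where "c12 f \<equiv> f (True, True)"

definition dx :: "(real \<Rightarrow> complex) \<Rightarrow> real \<Rightarrow> complex" where
  "dx g = (\<lambda>t. vector_derivative g (at t))"

definition smooth_c :: "(real \<Rightarrow> complex) \<Rightarrow> bool" where
  "smooth_c g \<longleftrightarrow> (\<forall>k t. ((dx ^^ k) g) differentiable (at t))"

definition sfun_ok :: "sfun \<Rightarrow> bool" where
  "sfun_ok f \<longleftrightarrow> (\<forall>i. smooth_c (f i))"

definition scal :: "complex \<Rightarrow> sfun \<Rightarrow> sfun" where
  "scal c f = (\<lambda>i t. c * f i t)"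

definition smul :: "sfun \<Rightarrow> sfun \<Rightarrow> sfun" where
  "smul f g = mk (\<lambda>t. c0 f t * c0 g t)
                 (\<lambda>t. c0 f t * c1 g t + c1 f t * c0 g t)
                 (\<lambda>t. c0 f t * c2 g t + c2 f t * c0 g t)
                 (\<lambda>t. c0 f t * c12 g t + c12 f t * c0 g t + c1 f t * c2 g t - c2 f t * c1 g t)"

text \<open>\<open>\<partial>\<^sub>x\<close>, and \<open>Dbar_i = \<partial>_{xi_i} - xi_i \<partial>_x\<close> written out in components.\<close>
definition pd :: "sfun \<Rightarrow> sfun" where
  "pd f = (\<lambda>i. dx (f i))"

definition D1 :: "sfun \<Rightarrow> sfun" where
  "D1 f = mk (c1 f) (- dx (c0 f)) (c12 f) (- dx (c2 f))"

definition D2 :: "sfun \<Rightarrow> sfun" where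
  "D2 f = mk (c2 f) (- c12 f) (- dx (c0 f)) (dx (c1 f))"

definition par :: "sfun \<Rightarrow> sfun" where
  "par f = mk (c0 f) (- c1 f) (- c2 f) (c12 f)"

definition hom :: "nat \<Rightarrow> sfun \<Rightarrow> bool" where
  "hom p f \<longleftrightarrow> (p = 0 \<and> c1 f = 0 \<and> c2 f = 0) \<or> (p = 1 \<and> c0 f = 0 \<and> c12 f = 0)"

text \<open>The contact vector field X_f (f homogeneous of parity p) and the action on F_lambda.\<close>
definition Xf :: "sfun \<Rightarrow> nat \<Rightarrow> sfun \<Rightarrow> sfun" where
  "Xf f p u = smul f (pd u) - scal ((-1) ^ p / 2) (smul (D1 f) (D1 u) + smul (D2 f) (D2 u))"

definition Lw :: "complex \<Rightarrow> sfun \<Rightarrow> nat \<Rightarrow> sfun \<Rightarrow> sfun" where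
  "Lw lam f p u = Xf f p u + scal lam (smul (pd f) u)"

text \<open>Generators of osp(2|2): X_f for f in {1,x,x^2,xi1 xi2,xi1,xi2,x xi1,x xi2}, with parities.\<close>
definition osp_gens :: "(sfun \<times> nat) set" where
  "osp_gens =
    {(mk (\<lambda>t. 1) 0 0 0, 0), (mk (\<lambda>t. complex_of_real t) 0 0 0, 0),
     (mk (\<lambda>t. (complex_of_real t)^2) 0 0 0, 0), (mk 0 0 0 (\<lambda>t. 1), 0),
     (mk 0 (\<lambda>t. 1) 0 0, 1), (mk 0 0 (\<lambda>t. 1) 0, 1),
     (mk 0 (\<lambda>t. complex_of_real t) 0 0, 1), (mk 0 0 (\<lambda>t. complex_of_real t) 0, 1)}"

text \<open>Action on operators D_{lambda mu}; a general operator is split into its even and odd parts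
  so that the sign (-1)^{p(f)p(A)} extends linearly.\<close>
definition op_ev :: "(sfun \<Rightarrow> sfun) \<Rightarrow> sfun \<Rightarrow> sfun" where
  "op_ev A = (\<lambda>u. scal (1/2) (A u + par (A (par u))))"

definition op_od :: "(sfun \<Rightarrow> sfun) \<Rightarrow> sfun \<Rightarrow> sfun" where
  "op_od A = (\<lambda>u. scal (1/2) (A u - par (A (par u))))"

definition Lop :: "complex \<Rightarrow> complex \<Rightarrow> sfun \<Rightarrow> nat \<Rightarrow> (sfun \<Rightarrow> sfun) \<Rightarrow> sfun \<Rightarrow> sfun" where
  "Lop lam mu f p A = (\<lambda>u. Lw mu f p (A u) - op_ev A (Lw lam f p u)
                              - scal ((-1) ^ p) (op_od A (Lw lam f p u)))"

text \<open>Action on principal symbols (F1,F2) in gr^{1/2} D_{lambda mu}.\<close>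
definition Lsym :: "complex \<Rightarrow> complex \<Rightarrow> sfun \<Rightarrow> nat \<Rightarrow> sfun \<times> sfun \<Rightarrow> sfun \<times> sfun" where
  "Lsym lam mu f p F =
     (let nu = mu - lam - 1/2 in
      (Lw nu f p (fst F) - scal (1/2) (smul (D1 (D2 f)) (snd F)),
       Lw nu f p (snd F) + scal (1/2) (smul (D1 (D2 f)) (fst F))))"

definition diffop :: "(sfun \<Rightarrow> sfun) \<Rightarrow> bool" where
  "diffop A \<longleftrightarrow> (\<exists>N a. (\<forall>l m n. sfun_ok (a l m n)) \<and>
     (\<forall>u. sfun_ok u \<longrightarrow>
        A u = (\<Sum>l\<le>N. \<Sum>m<2. \<Sum>n<2. smul (a l m n) ((pd ^^ l) ((D1 ^^ m) ((D2 ^^ n) u))))))"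

text \<open>Quantization maps gr^{1/2} D \<rightarrow> D^{1/2} given by a differential expression in (F1,F2):
  Q(F1,F2) = F1 Dbar1 + F2 Dbar2 + c(F1,F2), with c a differential expression
  (this encodes sigma_pr o Q = id).\<close>
definition is_quant :: "(sfun \<times> sfun \<Rightarrow> sfun \<Rightarrow> sfun) \<Rightarrow> bool" where
  "is_quant Q \<longleftrightarrow> (\<exists>A1 A2. diffop A1 \<and> diffop A2 \<and>
     (\<forall>F1 F2 u. sfun_ok F1 \<and> sfun_ok F2 \<and> sfun_ok u \<longrightarrow>
        Q (F1, F2) u = smul F1 (D1 u) + smul F2 (D2 u) + smul (A1 F1 + A2 F2) u))"

text \<open>osp(2|2)-equivariance (checked on the spanning generators and homogeneous symbols).\<close>
definition osp_equivariant :: "complex \<Rightarrow> complex \<Rightarrow> (sfun \<times> sfun \<Rightarrow> sfun \<Rightarrow> sfun) \<Rightarrow> bool" where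
  "osp_equivariant lam mu Q \<longleftrightarrow>
     (\<forall>(f, p) \<in> osp_gens. \<forall>F1 F2 q u.
        sfun_ok F1 \<and> sfun_ok F2 \<and> hom q F1 \<and> hom q F2 \<and> sfun_ok u \<longrightarrow>
        Lop lam mu f p (Q (F1, F2)) u = Q (Lsym lam mu f p (F1, F2)) u)"

end

theory Submission
  imports Defs
begin


lemma smooth_diff: "smooth_c f \<Longrightarrow> f differentiable (at t)"
  unfolding smooth_c_def by (metis funpow_0)

lemma smooth_dx: "smooth_c f \<Longrightarrow> smooth_c (dx f)"
  unfolding smooth_c_def by (metis funpow_Suc_right o_apply)

lemma dx_add_fun:
  assumes "\<And>t. f differentiable (at t)" "\<And>t. g differentiable (at t)"
  shows "dx (\<lambda>t. f t + g t) = (\<lambda>t. dx f t + dx g t)"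
  using assms by (simp add: dx_def)

lemma dxk_add:
  "(\<forall>j<k. \<forall>t. (dx^^j) f differentiable (at t) \<and> (dx^^j) g differentiable (at t)) \<Longrightarrow>
   (dx^^k) (\<lambda>t. f t + g t) = (\<lambda>t. (dx^^k) f t + (dx^^k) g t)"
proof (induction k arbitrary: f g)
  case 0 then show ?case by simp
next
  case (Suc k)
  have d: "dx (\<lambda>t. f t + g t) = (\<lambda>t. dx f t + dx g t)"
    using Suc.prems by (intro dx_add_fun) (metis funpow_0 zero_less_Suc)+
  have "(dx^^Suc k) (\<lambda>t. f t + g t) = (dx^^k) (\<lambda>t. dx f t + dx g t)"
    by (simp add: funpow_Suc_right d del: funpow.simps)
  also have "\<dots> = (\<lambda>t. (dx^^k) (dx f) t + (dx^^k) (dx g) t)"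
    apply (rule Suc.IH)
    using Suc.prems by (metis Suc_mono funpow_Suc_right o_apply)
  finally show ?case by (simp add: funpow_Suc_right del: funpow.simps)
qed

lemma smooth_add: "smooth_c f \<Longrightarrow> smooth_c g \<Longrightarrow> smooth_c (\<lambda>t. f t + g t)"
  unfolding smooth_c_def
  by (subst dxk_add) auto

lemma dx_mult_fun:
  assumes "\<And>t. f differentiable (at t)" "\<And>t. g differentiable (at t)"
  shows "dx (\<lambda>t. f t * g t) = (\<lambda>t. f t * dx g t + dx f t * g t)"
  using assms by (simp add: dx_def)

lemma smooth_mult_aux:
  "\<forall>f g. smooth_c f \<and> smooth_c g \<longrightarrow> (\<forall>j\<le>k. \<forall>t. (dx^^j) (\<lambda>t. f t * g t) differentiable (at t))"
proof (induction k)
  case 0 then show ?case by (auto intro!: differentiable_mult simp: smooth_diff)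
next
  case (Suc k)
  show ?case
  proof (intro allI impI)
    fix f g j t assume fg: "smooth_c f \<and> smooth_c g" and j: "j \<le> Suc k"
    show "(dx^^j) (\<lambda>t. f t * g t) differentiable (at t)"
    proof (cases j)
      case 0 then show ?thesis using fg by (auto intro!: differentiable_mult simp: smooth_diff)
    next
      case (Suc j')
      have sf: "smooth_c (dx f)" "smooth_c (dx g)" using fg smooth_dx by auto
      have IH1: "\<forall>i\<le>k. \<forall>t. (dx^^i) (\<lambda>t. f t * dx g t) differentiable (at t)"
        using Suc.IH fg sf by blast
      have IH2: "\<forall>i\<le>k. \<forall>t. (dx^^i) (\<lambda>t. dx f t * g t) differentiable (at t)"
        using Suc.IH fg sf by blast
      have d: "dx (\<lambda>t. f t * g t) = (\<lambda>t. f t * dx g t + dx f t * g t)"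
        using fg by (intro dx_mult_fun) (auto simp: smooth_diff)
      have "(dx^^j) (\<lambda>t. f t * g t) = (dx^^j') (\<lambda>t. f t * dx g t + dx f t * g t)"
        using Suc by (simp add: funpow_Suc_right d del: funpow.simps)
      also have "\<dots> = (\<lambda>t. (dx^^j') (\<lambda>t. f t * dx g t) t + (dx^^j') (\<lambda>t. dx f t * g t) t)"
        apply (rule dxk_add) using IH1 IH2 Suc j by auto
      finally show ?thesis using IH1 IH2 Suc j by (auto intro!: differentiable_add)
    qed
  qed
qed

lemma smooth_mult: "smooth_c f \<Longrightarrow> smooth_c g \<Longrightarrow> smooth_c (\<lambda>t. f t * g t)"
  using smooth_mult_aux unfolding smooth_c_def by blast

lemma dx_const[simp]: "dx (\<lambda>t. c) = (\<lambda>t. 0)"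
  by (simp add: dx_def)

lemma dxk_zero: "(dx^^k) (\<lambda>t. 0) = (\<lambda>t. 0)"
  by (induction k) (auto simp: funpow_Suc_right simp del: funpow.simps)

lemma dxk_const: "(dx^^k) (\<lambda>t. c) = (\<lambda>t. if k = 0 then c else 0)"
  by (cases k) (auto simp: funpow_Suc_right dxk_zero simp del: funpow.simps)

lemma smooth_const[simp]: "smooth_c (\<lambda>t. c)"
  unfolding smooth_c_def dxk_const by auto

lemma dx_ofreal[simp]: "dx (\<lambda>t. complex_of_real t) = (\<lambda>t. 1)"
  unfolding dx_def
  by (auto intro!: ext vector_derivative_at derivative_eq_intros)

lemma smooth_ofreal[simp]: "smooth_c (\<lambda>t. complex_of_real t)"
  unfolding smooth_c_def
proof (intro allI)
  fix k t show "(dx ^^ k) (\<lambda>t. complex_of_real t) differentiable at t"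
  proof (cases k)
    case 0 then show ?thesis by (simp add: differentiable_def) (auto intro!: derivative_eq_intros)
  next
    case (Suc k') then show ?thesis
      by (simp add: funpow_Suc_right dxk_const del: funpow.simps)
  qed
qed

lemma smooth_minus: "smooth_c f \<Longrightarrow> smooth_c (\<lambda>t. - f t)"
  using smooth_mult[of "\<lambda>t. -1" f] by simp

lemma smooth_diffc: "smooth_c f \<Longrightarrow> smooth_c g \<Longrightarrow> smooth_c (\<lambda>t. f t - g t)"
  using smooth_add[of f "\<lambda>t. - g t"] smooth_minus[of g] by simp

lemma dx_add[simp]: "smooth_c f \<Longrightarrow> smooth_c g \<Longrightarrow> dx (\<lambda>t. f t + g t) = (\<lambda>t. dx f t + dx g t)"
  by (simp add: dx_add_fun smooth_diff)
lemma dx_mult[simp]: "smooth_c f \<Longrightarrow> smooth_c g \<Longrightarrow> dx (\<lambda>t. f t * g t) = (\<lambda>t. f t * dx g t + dx f t * g t)"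
  by (simp add: dx_mult_fun smooth_diff)
lemma dx_minus[simp]: "smooth_c f \<Longrightarrow> dx (\<lambda>t. - f t) = (\<lambda>t. - dx f t)"
  by (simp add: dx_def smooth_diff)
lemma dx_diff[simp]: "smooth_c f \<Longrightarrow> smooth_c g \<Longrightarrow> dx (\<lambda>t. f t - g t) = (\<lambda>t. dx f t - dx g t)"
  by (simp add: dx_def smooth_diff)

lemma smooth_divc: "smooth_c f \<Longrightarrow> smooth_c (\<lambda>t. f t / c)"
  using smooth_mult[of "\<lambda>t. 1/c" f] by (simp add: field_simps)
lemma dx_divc[simp]: "smooth_c f \<Longrightarrow> dx (\<lambda>t. f t / c) = (\<lambda>t. dx f t / c)"
  using dx_mult[of "\<lambda>t. 1/c" f] by (simp add: field_simps)

lemmas smooth_rules = smooth_divc smooth_add smooth_mult smooth_minus smooth_diffc smooth_dx smooth_const smooth_ofreal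

lemma sfun_ok_smooth[simp]: "sfun_ok f \<Longrightarrow> smooth_c (f i)"
  unfolding sfun_ok_def by blast




lemma mk_c[simp]: "mk a b c d (False,False) = a" "mk a b c d (True,False) = b"
  "mk a b c d (False,True) = c" "mk a b c d (True,True) = d"
  by (simp_all add: mk_def)

lemma sfun_eqI: "(\<And>t. c0 f t = c0 g t) \<Longrightarrow> (\<And>t. c1 f t = c1 g t) \<Longrightarrow>
  (\<And>t. c2 f t = c2 g t) \<Longrightarrow> (\<And>t. c12 f t = c12 g t) \<Longrightarrow> f = g"
  apply (rule ext)+ subgoal for i t by (cases i) (metis (full_types)) done

definition Qc :: "complex \<Rightarrow> sfun \<times> sfun \<Rightarrow> sfun \<Rightarrow> sfun" where
 "Qc c = (\<lambda>(F1,F2) u. smul F1 (D1 u) + smul F2 (D2 u) + smul (scal c (D1 (par F1) + D2 (par F2))) u)"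

lemmas unf = smul_def scal_def pd_def D1_def D2_def par_def Xf_def Lw_def Lop_def op_ev_def op_od_def
  Lsym_def Qc_def plus_fun_def fun_diff_def fun_Compl_def zero_fun_def Let_def power2_eq_square




lemma exist_equiv:
  assumes "sfun_ok F1" "sfun_ok F2" "sfun_ok u" "hom q F1" "hom q F2" "(f,p) \<in> osp_gens"
  shows "Lop (c*d) (c*d-d) f p (Qc c (F1,F2)) u = Qc c (Lsym (c*d) (c*d-d) f p (F1,F2)) u"
  using assms(4,5,6) unfolding hom_def osp_gens_def
  apply (simp only: prod.inject insert_iff empty_iff)
  apply (elim disjE conjE; hypsubst; rule sfun_eqI)
  apply (simp_all add: unf smooth_rules assms(1-3))
  apply (simp_all add: field_simps)
  done



lemma sfun_ok_mk: "smooth_c a \<Longrightarrow> smooth_c b \<Longrightarrow> smooth_c c \<Longrightarrow> smooth_c d \<Longrightarrow> sfun_ok (mk a b c d)"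
  unfolding sfun_ok_def mk_def by auto

definition coefA1 :: "complex \<Rightarrow> nat \<Rightarrow> nat \<Rightarrow> nat \<Rightarrow> sfun" where
  "coefA1 c l m n = (if l=0 \<and> m=1 \<and> n=0 then mk (\<lambda>t. -c) (\<lambda>t. 0) (\<lambda>t. 0) (\<lambda>t. 0)
     else if l=1 \<and> m=0 \<and> n=0 then mk (\<lambda>t. 0) (\<lambda>t. -2*c) (\<lambda>t. 0) (\<lambda>t. 0)
     else if l=0 \<and> m=1 \<and> n=1 then mk (\<lambda>t. 0) (\<lambda>t. 0) (\<lambda>t. -2*c) (\<lambda>t. 0)
     else if l=1 \<and> m=0 \<and> n=1 then mk (\<lambda>t. 0) (\<lambda>t. 0) (\<lambda>t. 0) (\<lambda>t. 4*c)
     else mk (\<lambda>t. 0) (\<lambda>t. 0) (\<lambda>t. 0) (\<lambda>t. 0))"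

definition coefA2 :: "complex \<Rightarrow> nat \<Rightarrow> nat \<Rightarrow> nat \<Rightarrow> sfun" where
  "coefA2 c l m n = (if l=0 \<and> m=0 \<and> n=1 then mk (\<lambda>t. -c) (\<lambda>t. 0) (\<lambda>t. 0) (\<lambda>t. 0)
     else if l=0 \<and> m=1 \<and> n=1 then mk (\<lambda>t. 0) (\<lambda>t. 2*c) (\<lambda>t. 0) (\<lambda>t. 0)
     else if l=1 \<and> m=0 \<and> n=0 then mk (\<lambda>t. 0) (\<lambda>t. 0) (\<lambda>t. -2*c) (\<lambda>t. 0)
     else if l=1 \<and> m=1 \<and> n=0 then mk (\<lambda>t. 0) (\<lambda>t. 0) (\<lambda>t. 0) (\<lambda>t. -4*c)
     else mk (\<lambda>t. 0) (\<lambda>t. 0) (\<lambda>t. 0) (\<lambda>t. 0))"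

lemma sum_comp: "(\<Sum>x\<in>S. (f x :: sfun)) i t = (\<Sum>x\<in>S. f x i t)"
  by (induction S rule: infinite_finite_induct) auto

lemma diffop_A1: "diffop (\<lambda>F. scal c (D1 (par F)))"
  unfolding diffop_def
  apply (rule exI[of _ 1], rule exI[of _ "coefA1 c"])
  apply (intro conjI allI impI)
   apply (simp add: coefA1_def sfun_ok_mk)
  apply (rule sfun_eqI)
     apply (simp_all add: sum_comp numeral_2_eq_2 lessThan_Suc atMost_Suc coefA1_def unf)
  done

lemma diffop_A2: "diffop (\<lambda>F. scal c (D2 (par F)))"
  unfolding diffop_def
  apply (rule exI[of _ 1], rule exI[of _ "coefA2 c"])
  apply (intro conjI allI impI)
   apply (simp add: coefA2_def sfun_ok_mk)
  apply (rule sfun_eqI)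
     apply (simp_all add: sum_comp numeral_2_eq_2 lessThan_Suc atMost_Suc coefA2_def unf)
  done

lemma quant_Qc: "is_quant (Qc c)"
  unfolding is_quant_def
  apply (rule exI[of _ "\<lambda>F. scal c (D1 (par F))"], rule exI[of _ "\<lambda>F. scal c (D2 (par F))"])
  apply (simp add: diffop_A1 diffop_A2 Qc_def)
  apply (intro allI impI)
  apply (rule sfun_eqI)
  apply (simp_all add: unf algebra_simps)
  done

lemma formula_Qc:
  assumes "hom q F1" "hom q F2" "sfun_ok F1" "sfun_ok F2"
  shows "scal c (D1 (par F1) + D2 (par F2)) = scal ((-1)^q * c) (D1 F1 + D2 F2)"
  using assms(1,2) unfolding hom_def
  apply -
  apply (elim disjE conjE; hypsubst; rule sfun_eqI)
  apply (simp_all add: unf assms(3,4) algebra_simps)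
  done



lemma sfun_ok_comp: "sfun_ok f \<longleftrightarrow> smooth_c (c0 f) \<and> smooth_c (c1 f) \<and> smooth_c (c2 f) \<and> smooth_c (c12 f)"
  unfolding sfun_ok_def
  apply (rule iffI)
   apply blast
  apply (rule allI)
  subgoal for i by (cases i) (metis (full_types))
  done

lemma ok_add[simp]: "sfun_ok f \<Longrightarrow> sfun_ok g \<Longrightarrow> sfun_ok (f + g)"
  by (simp add: sfun_ok_comp unf smooth_rules del: sfun_ok_smooth)
lemma ok_diff[simp]: "sfun_ok f \<Longrightarrow> sfun_ok g \<Longrightarrow> sfun_ok (f - g)"
  by (simp add: sfun_ok_comp unf smooth_rules del: sfun_ok_smooth)
lemma ok_neg[simp]: "sfun_ok f \<Longrightarrow> sfun_ok (- f)"
  by (simp add: sfun_ok_comp unf smooth_rules del: sfun_ok_smooth)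
lemma ok_zero[simp]: "sfun_ok 0"
  by (simp add: sfun_ok_comp unf smooth_rules del: sfun_ok_smooth)
lemma ok_smul[simp]: "sfun_ok f \<Longrightarrow> sfun_ok g \<Longrightarrow> sfun_ok (smul f g)"
  by (simp add: sfun_ok_comp unf smooth_rules del: sfun_ok_smooth)
lemma ok_scal[simp]: "sfun_ok f \<Longrightarrow> sfun_ok (scal k f)"
  by (simp add: sfun_ok_comp unf smooth_rules del: sfun_ok_smooth)
lemma ok_pd[simp]: "sfun_ok f \<Longrightarrow> sfun_ok (pd f)"
  by (simp add: sfun_ok_comp unf smooth_rules del: sfun_ok_smooth)
lemma ok_D1[simp]: "sfun_ok f \<Longrightarrow> sfun_ok (D1 f)"
  by (simp add: sfun_ok_comp unf smooth_rules del: sfun_ok_smooth)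
lemma ok_D2[simp]: "sfun_ok f \<Longrightarrow> sfun_ok (D2 f)"
  by (simp add: sfun_ok_comp unf smooth_rules del: sfun_ok_smooth)
lemma ok_par[simp]: "sfun_ok f \<Longrightarrow> sfun_ok (par f)"
  by (simp add: sfun_ok_comp unf smooth_rules del: sfun_ok_smooth)
lemma ok_mk[simp]: "sfun_ok (mk a b c d) \<longleftrightarrow> smooth_c a \<and> smooth_c b \<and> smooth_c c \<and> smooth_c d"
  by (simp add: sfun_ok_comp del: sfun_ok_smooth)

lemma ok_sum: "(\<And>x. x \<in> S \<Longrightarrow> sfun_ok (f x)) \<Longrightarrow> sfun_ok (\<Sum>x\<in>S. f x)"
  by (induction S rule: infinite_finite_induct) auto

lemma ok_gens: "(f,p) \<in> osp_gens \<Longrightarrow> sfun_ok f"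
  unfolding osp_gens_def by (auto simp: unf smooth_rules)

lemma pd_add: "sfun_ok u \<Longrightarrow> sfun_ok v \<Longrightarrow> pd (u + v) = pd u + pd v"
  by (rule sfun_eqI) (simp_all add: unf)
lemma D1_add: "sfun_ok u \<Longrightarrow> sfun_ok v \<Longrightarrow> D1 (u + v) = D1 u + D1 v"
  by (rule sfun_eqI) (simp_all add: unf)
lemma D2_add: "sfun_ok u \<Longrightarrow> sfun_ok v \<Longrightarrow> D2 (u + v) = D2 u + D2 v"
  by (rule sfun_eqI) (simp_all add: unf)
lemma pd_scal: "sfun_ok u \<Longrightarrow> pd (scal k u) = scal k (pd u)"
  by (rule sfun_eqI) (simp_all add: unf)
lemma D1_scal: "sfun_ok u \<Longrightarrow> D1 (scal k u) = scal k (D1 u)"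
  by (rule sfun_eqI) (simp_all add: unf)
lemma D2_scal: "sfun_ok u \<Longrightarrow> D2 (scal k u) = scal k (D2 u)"
  by (rule sfun_eqI) (simp_all add: unf)

lemma ok_pow: "(\<And>u. sfun_ok u \<Longrightarrow> sfun_ok (T u)) \<Longrightarrow> sfun_ok u \<Longrightarrow> sfun_ok ((T^^l) u)"
  by (induction l) auto
lemma pow_add: "(\<And>u. sfun_ok u \<Longrightarrow> sfun_ok (T u)) \<Longrightarrow>
   (\<And>u v. sfun_ok u \<Longrightarrow> sfun_ok v \<Longrightarrow> T (u + v) = T u + T v) \<Longrightarrow>
   sfun_ok u \<Longrightarrow> sfun_ok v \<Longrightarrow> (T^^l) (u + v) = (T^^l) u + (T^^l) v"
  by (induction l) (auto simp: ok_pow)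
lemma pow_scal: "(\<And>u. sfun_ok u \<Longrightarrow> sfun_ok (T u)) \<Longrightarrow>
   (\<And>u. sfun_ok u \<Longrightarrow> T (scal k u) = scal k (T u)) \<Longrightarrow>
   sfun_ok u \<Longrightarrow> (T^^l) (scal k u) = scal k ((T^^l) u)"
  by (induction l) (auto simp: ok_pow)

definition opL :: "nat \<Rightarrow> nat \<Rightarrow> nat \<Rightarrow> sfun \<Rightarrow> sfun" where
  "opL l m n u = (pd ^^ l) ((D1 ^^ m) ((D2 ^^ n) u))"

lemma ok_opL: "sfun_ok u \<Longrightarrow> sfun_ok (opL l m n u)"
  unfolding opL_def
  by (intro ok_pow[where T=pd] ok_pow[where T=D1] ok_pow[where T=D2] ok_pd ok_D1 ok_D2)
lemma opL_add: "sfun_ok u \<Longrightarrow> sfun_ok v \<Longrightarrow> opL l m n (u + v) = opL l m n u + opL l m n v"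
  unfolding opL_def
  by (simp add: pow_add ok_pow pd_add D1_add D2_add)
lemma opL_scal: "sfun_ok u \<Longrightarrow> opL l m n (scal k u) = scal k (opL l m n u)"
  unfolding opL_def
  by (simp add: pow_scal ok_pow pd_scal D1_scal D2_scal)

lemma smul_add2: "smul a (x + y) = smul a x + smul a y"
  by (rule sfun_eqI) (simp_all add: unf algebra_simps)
lemma smul_scal2: "smul a (scal k x) = scal k (smul a x)"
  by (rule sfun_eqI) (simp_all add: unf algebra_simps)
lemma scal_sum: "scal k (\<Sum>x\<in>S. f x) = (\<Sum>x\<in>S. scal k (f x))"
  by (rule sfun_eqI) (simp_all add: sum_comp scal_def sum_distrib_left)

lemma diffop_form:
  assumes "diffop A"
  obtains N a where "\<And>l m n. sfun_ok (a l m n)"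
    "\<And>u. sfun_ok u \<Longrightarrow> A u = (\<Sum>l\<le>N. \<Sum>m<2. \<Sum>n<2. smul (a l m n) (opL l m n u))"
  using assms unfolding diffop_def opL_def by blast

lemma diffop_ok: "diffop A \<Longrightarrow> sfun_ok u \<Longrightarrow> sfun_ok (A u)"
  by (erule diffop_form) (auto intro!: ok_sum simp: ok_opL)

lemma diffop_add: "diffop A \<Longrightarrow> sfun_ok u \<Longrightarrow> sfun_ok v \<Longrightarrow> A (u + v) = A u + A v"
  by (erule diffop_form) (simp add: opL_add smul_add2 sum.distrib)

lemma diffop_scal: "diffop A \<Longrightarrow> sfun_ok u \<Longrightarrow> A (scal k u) = scal k (A u)"
  by (erule diffop_form) (simp add: opL_scal smul_scal2 scal_sum)




definition one :: sfun where "one = mk (\<lambda>t. 1) (\<lambda>t. 0) (\<lambda>t. 0) (\<lambda>t. 0)"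

lemma ok_one[simp]: "sfun_ok one" by (simp add: one_def)

lemma ok_Xf[simp]: "sfun_ok f \<Longrightarrow> sfun_ok u \<Longrightarrow> sfun_ok (Xf f p u)"
  by (simp add: Xf_def)
lemma ok_Lw[simp]: "sfun_ok f \<Longrightarrow> sfun_ok u \<Longrightarrow> sfun_ok (Lw l f p u)"
  by (simp add: Lw_def)

definition Tq :: "complex \<Rightarrow> complex \<Rightarrow> sfun \<Rightarrow> nat \<Rightarrow> sfun \<times> sfun \<Rightarrow> sfun \<Rightarrow> sfun" where
"Tq lam mu f p F X = (let ph = Lw lam f p one;
    R = (\<lambda>v. smul (fst F) (D1 v) + smul (snd F) (D2 v) + smul X v) in
    Lw mu f p X - scal (1/2) (R ph + par (R (par ph)))
      - scal ((-1)^p) (scal (1/2) (R ph - par (R (par ph)))))"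

lemma Q_one: "smul F1 (D1 one) + smul F2 (D2 one) + smul X one = X"
  by (rule sfun_eqI) (simp_all add: unf one_def)

lemma Lop_one:
  assumes Q: "\<And>u. sfun_ok u \<Longrightarrow> Q (F1,F2) u = smul F1 (D1 u) + smul F2 (D2 u) + smul X u"
    and ok: "sfun_ok f"
  shows "Lop lam mu f p (Q (F1,F2)) one = Tq lam mu f p (F1,F2) X"
proof -
  have o1: "sfun_ok (Lw lam f p one)" "sfun_ok (par (Lw lam f p one))" using ok by simp_all
  show ?thesis
    unfolding Lop_def op_ev_def op_od_def Tq_def Let_def
    by (simp only: Q o1 ok_one Q_one fst_conv snd_conv)
qed

lemma Tq_diff:
  assumes "(f,p) \<in> osp_gens" "sfun_ok X" "sfun_ok Y" "sfun_ok F1" "sfun_ok F2"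
  shows "Tq lam mu f p (F1,F2) X - Tq lam mu f p (F1,F2) Y = Lw (mu - lam) f p (X - Y)"
  using assms(1) unfolding osp_gens_def
  apply (simp only: prod.inject insert_iff empty_iff simp_thms)
  apply (elim disjE conjE; hypsubst; rule sfun_eqI)
  apply (simp_all add: unf Tq_def one_def smooth_rules assms(2-5))
  apply (simp_all add: field_simps)
  done




lemma ok_Lsym:
  assumes "sfun_ok f" "sfun_ok F1" "sfun_ok F2"
  shows "sfun_ok (fst (Lsym lam mu f p (F1,F2)))" "sfun_ok (snd (Lsym lam mu f p (F1,F2)))"
  using assms by (simp_all add: Lsym_def Let_def)

lemma hom_pt: "hom q F \<longleftrightarrow> (q = 0 \<and> (\<forall>t. c1 F t = 0 \<and> c2 F t = 0)) \<or> (q = 1 \<and> (\<forall>t. c0 F t = 0 \<and> c12 F t = 0))"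
  unfolding hom_def by (auto simp: fun_eq_iff)

lemma hom_Lsym:
  assumes "(f,p) \<in> osp_gens" "hom q F1" "hom q F2" "sfun_ok F1" "sfun_ok F2"
  shows "hom ((q+p) mod 2) (fst (Lsym lam mu f p (F1,F2))) \<and> hom ((q+p) mod 2) (snd (Lsym lam mu f p (F1,F2)))"
  using assms(1-3) unfolding osp_gens_def hom_def
  apply (simp only: prod.inject insert_iff empty_iff simp_thms)
  apply (elim disjE conjE; hypsubst)
  apply (simp_all only: hom_pt)
  apply (simp_all add: unf smooth_rules assms(4-5))
  done




abbreviation "g1 \<equiv> mk (\<lambda>t. 1) 0 0 0"
abbreviation "gx \<equiv> mk (\<lambda>t. complex_of_real t) 0 0 0"
abbreviation "gx2 \<equiv> mk (\<lambda>t. (complex_of_real t)^2) 0 0 0"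
abbreviation "g12 \<equiv> mk 0 0 0 (\<lambda>t. 1)"
abbreviation "o1 \<equiv> mk 0 (\<lambda>t. 1) 0 0"
abbreviation "o2 \<equiv> mk 0 0 (\<lambda>t. 1) 0"
abbreviation "ox1 \<equiv> mk 0 (\<lambda>t. complex_of_real t) 0 0"
abbreviation "ox2 \<equiv> mk 0 0 (\<lambda>t. complex_of_real t) 0"

lemma cas_tgt:
  assumes "sfun_ok G"
  shows "Lw w g1 0 (Lw w gx2 0 G) - Lw w gx 0 (Lw w gx 0 G) - Lw w g12 0 (Lw w g12 0 G)
     - scal 2 (Lw w o1 1 (Lw w ox1 1 G)) - scal 2 (Lw w o2 1 (Lw w ox2 1 G)) = scal (-(w^2)) G"
  apply (rule sfun_eqI)
  apply (simp_all add: unf smooth_rules assms)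
  apply (simp_all add: field_simps)
  done




lemma cas_sym:
  fixes lam mu :: complex
  assumes "sfun_ok F1" "sfun_ok F2"
  defines "P \<equiv> Lsym lam mu"
  shows "fst (P g1 0 (P gx2 0 (F1,F2))) - fst (P gx 0 (P gx 0 (F1,F2))) - fst (P g12 0 (P g12 0 (F1,F2)))
     - scal 2 (fst (P o1 1 (P ox1 1 (F1,F2)))) - scal 2 (fst (P o2 1 (P ox2 1 (F1,F2))))
     = scal ((mu - lam) - (mu - lam)^2) F1 \<and>
     snd (P g1 0 (P gx2 0 (F1,F2))) - snd (P gx 0 (P gx 0 (F1,F2))) - snd (P g12 0 (P g12 0 (F1,F2)))
     - scal 2 (snd (P o1 1 (P ox1 1 (F1,F2)))) - scal 2 (snd (P o2 1 (P ox2 1 (F1,F2))))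
     = scal ((mu - lam) - (mu - lam)^2) F2"
  unfolding P_def
  apply (intro conjI; rule sfun_eqI)
  apply (simp_all add: unf smooth_rules assms)
  apply (simp_all add: field_simps)
  done




lemma minus_scal: "(x::sfun) - y = x + scal (-1) y"
  by (rule sfun_eqI) (simp_all add: unf)

lemma diffop_diff:
  assumes a: "diffop A" "sfun_ok x" "sfun_ok y"
  shows "A (x - y) = A x - A y"
proof -
  have "A (x - y) = A (x + scal (-1) y)" by (simp only: minus_scal)
  also have "\<dots> = A x + A (scal (-1) y)" by (rule diffop_add) (simp_all add: a)
  also have "\<dots> = A x + scal (-1) (A y)" by (simp only: diffop_scal[OF a(1) a(3)])
  also have "\<dots> = A x - A y" by (simp only: minus_scal)
  finally show ?thesis .
qed

lemma eq_one:
  assumes qA: "\<forall>F1 F2 u. sfun_ok F1 \<and> sfun_ok F2 \<and> sfun_ok u \<longrightarrow>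
        Q (F1, F2) u = smul F1 (D1 u) + smul F2 (D2 u) + smul (A1 F1 + A2 F2) u"
    and dA: "diffop A1" "diffop A2"
    and eqv: "osp_equivariant lam mu Q"
    and fp: "(f,p) \<in> osp_gens" and h: "hom q F1" "hom q F2" and ok: "sfun_ok F1" "sfun_ok F2"
  shows "Tq lam mu f p (F1,F2) (A1 F1 + A2 F2) =
     A1 (fst (Lsym lam mu f p (F1,F2))) + A2 (snd (Lsym lam mu f p (F1,F2)))"
proof -
  have okf: "sfun_ok f" using fp by (rule ok_gens)
  have e: "Lop lam mu f p (Q (F1, F2)) one = Q (Lsym lam mu f p (F1, F2)) one"
    using eqv fp h ok unfolding osp_equivariant_def by fastforce
  have l: "Lop lam mu f p (Q (F1, F2)) one = Tq lam mu f p (F1,F2) (A1 F1 + A2 F2)"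
    apply (rule Lop_one) using qA ok okf by blast+
  let ?L1 = "fst (Lsym lam mu f p (F1,F2))" and ?L2 = "snd (Lsym lam mu f p (F1,F2))"
  have oL: "sfun_ok ?L1" "sfun_ok ?L2" using ok_Lsym[OF okf ok] by auto
  have "Q (Lsym lam mu f p (F1, F2)) one = Q (?L1, ?L2) one" by simp
  also have "\<dots> = smul ?L1 (D1 one) + smul ?L2 (D2 one) + smul (A1 ?L1 + A2 ?L2) one"
    using qA oL ok_one by blast
  also have "\<dots> = A1 ?L1 + A2 ?L2" by (rule Q_one)
  finally show ?thesis using e l by simp
qed

lemma Dl_step:
  assumes qA: "\<forall>F1 F2 u. sfun_ok F1 \<and> sfun_ok F2 \<and> sfun_ok u \<longrightarrow>
        Q (F1, F2) u = smul F1 (D1 u) + smul F2 (D2 u) + smul (A1 F1 + A2 F2) u"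
    and dA: "diffop A1" "diffop A2"
    and eqv: "osp_equivariant lam mu Q"
    and qB: "\<forall>F1 F2 u. sfun_ok F1 \<and> sfun_ok F2 \<and> sfun_ok u \<longrightarrow>
        Q' (F1, F2) u = smul F1 (D1 u) + smul F2 (D2 u) + smul (B1 F1 + B2 F2) u"
    and dB: "diffop B1" "diffop B2"
    and eqv': "osp_equivariant lam mu Q'"
    and fp: "(f,p) \<in> osp_gens" and h: "hom q F1" "hom q F2" and ok: "sfun_ok F1" "sfun_ok F2"
  shows "(A1 (fst (Lsym lam mu f p (F1,F2))) + A2 (snd (Lsym lam mu f p (F1,F2))))
       - (B1 (fst (Lsym lam mu f p (F1,F2))) + B2 (snd (Lsym lam mu f p (F1,F2))))
       = Lw (mu - lam) f p ((A1 F1 + A2 F2) - (B1 F1 + B2 F2))"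
proof -
  have a: "Tq lam mu f p (F1,F2) (A1 F1 + A2 F2) =
     A1 (fst (Lsym lam mu f p (F1,F2))) + A2 (snd (Lsym lam mu f p (F1,F2)))"
    by (rule eq_one[OF qA dA eqv fp h ok])
  have b: "Tq lam mu f p (F1,F2) (B1 F1 + B2 F2) =
     B1 (fst (Lsym lam mu f p (F1,F2))) + B2 (snd (Lsym lam mu f p (F1,F2)))"
    by (rule eq_one[OF qB dB eqv' fp h ok])
  have okX: "sfun_ok (A1 F1 + A2 F2)" "sfun_ok (B1 F1 + B2 F2)"
    using diffop_ok dA dB ok by auto
  show ?thesis
    using Tq_diff[OF fp okX ok, of lam mu] a b by simp
qed




lemma gens_mem:
  "(g1,0) \<in> osp_gens" "(gx,0) \<in> osp_gens" "(gx2,0) \<in> osp_gens" "(g12,0) \<in> osp_gens"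
  "(o1,1) \<in> osp_gens" "(o2,1) \<in> osp_gens" "(ox1,1) \<in> osp_gens" "(ox2,1) \<in> osp_gens"
  unfolding osp_gens_def by simp_all

lemma uniq_hom:
  assumes ne: "mu \<noteq> lam"
    and qA: "\<forall>F1 F2 u. sfun_ok F1 \<and> sfun_ok F2 \<and> sfun_ok u \<longrightarrow>
        Q (F1, F2) u = smul F1 (D1 u) + smul F2 (D2 u) + smul (A1 F1 + A2 F2) u"
    and dA: "diffop A1" "diffop A2"
    and eqv: "osp_equivariant lam mu Q"
    and qB: "\<forall>F1 F2 u. sfun_ok F1 \<and> sfun_ok F2 \<and> sfun_ok u \<longrightarrow>
        Q' (F1, F2) u = smul F1 (D1 u) + smul F2 (D2 u) + smul (B1 F1 + B2 F2) u"
    and dB: "diffop B1" "diffop B2"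
    and eqv': "osp_equivariant lam mu Q'"
    and h: "hom q F1" "hom q F2" and ok: "sfun_ok F1" "sfun_ok F2"
  shows "A1 F1 + A2 F2 = B1 F1 + B2 F2"
proof -
  define Dl where "Dl = (\<lambda>F. (A1 (fst F) + A2 (snd F)) - (B1 (fst F) + B2 (snd F)))"
  define w where "w = mu - lam"
  define P where "P = Lsym lam mu"
  have step: "\<And>f p q F1 F2. (f,p) \<in> osp_gens \<Longrightarrow> hom q F1 \<Longrightarrow> hom q F2 \<Longrightarrow> sfun_ok F1 \<Longrightarrow> sfun_ok F2 \<Longrightarrow>
     Dl (P f p (F1,F2)) = Lw w f p (Dl (F1,F2))"
    unfolding Dl_def P_def w_def using Dl_step[OF qA dA eqv qB dB eqv'] by simp
  have okP: "\<And>f p F1 F2. (f,p) \<in> osp_gens \<Longrightarrow> sfun_ok F1 \<Longrightarrow> sfun_ok F2 \<Longrightarrow>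
      sfun_ok (fst (P f p (F1,F2))) \<and> sfun_ok (snd (P f p (F1,F2)))"
    unfolding P_def using ok_Lsym ok_gens by blast
  have homP: "\<And>f p q F1 F2. (f,p) \<in> osp_gens \<Longrightarrow> hom q F1 \<Longrightarrow> hom q F2 \<Longrightarrow> sfun_ok F1 \<Longrightarrow> sfun_ok F2 \<Longrightarrow>
      hom ((q+p) mod 2) (fst (P f p (F1,F2))) \<and> hom ((q+p) mod 2) (snd (P f p (F1,F2)))"
    unfolding P_def using hom_Lsym by blast
  have step2: "\<And>f p g r. (f,p) \<in> osp_gens \<Longrightarrow> (g,r) \<in> osp_gens \<Longrightarrow>
      Dl (P f p (P g r (F1,F2))) = Lw w f p (Lw w g r (Dl (F1,F2)))"
  proof -
    fix f p g r assume fp: "(f,p) \<in> osp_gens" and gr: "(g,r) \<in> osp_gens"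
    let ?G = "P g r (F1,F2)"
    have "P f p ?G = P f p (fst ?G, snd ?G)" by simp
    hence "Dl (P f p ?G) = Lw w f p (Dl (fst ?G, snd ?G))"
      using step[OF fp, of "(q+r) mod 2" "fst ?G" "snd ?G"] homP[OF gr h ok] okP[OF gr ok] by simp
    also have "Dl (fst ?G, snd ?G) = Lw w g r (Dl (F1,F2))"
      using step[OF gr h ok] by simp
    finally show "Dl (P f p ?G) = Lw w f p (Lw w g r (Dl (F1,F2)))" .
  qed
  have Dl_diff: "\<And>x1 x2 y1 y2. sfun_ok x1 \<Longrightarrow> sfun_ok x2 \<Longrightarrow> sfun_ok y1 \<Longrightarrow> sfun_ok y2 \<Longrightarrow>
      Dl (x1 - x2, y1 - y2) = Dl (x1, y1) - Dl (x2, y2)"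
    unfolding Dl_def using dA dB
    by (simp add: diffop_diff[OF dA(1)] diffop_diff[OF dA(2)] diffop_diff[OF dB(1)] diffop_diff[OF dB(2)] fun_eq_iff algebra_simps)
  have Dl_scal: "\<And>x y k. sfun_ok x \<Longrightarrow> sfun_ok y \<Longrightarrow> Dl (scal k x, scal k y) = scal k (Dl (x, y))"
    unfolding Dl_def using dA dB
    by (simp add: diffop_scal[OF dA(1)] diffop_scal[OF dA(2)] diffop_scal[OF dB(1)] diffop_scal[OF dB(2)])
      (rule sfun_eqI; simp add: unf algebra_simps)
  have okD: "sfun_ok (Dl (F1,F2))"
    unfolding Dl_def using dA dB ok by (simp add: diffop_ok)
  have okPP: "\<And>f p g r. (f,p) \<in> osp_gens \<Longrightarrow> (g,r) \<in> osp_gens \<Longrightarrow>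
      sfun_ok (fst (P f p (P g r (F1,F2)))) \<and> sfun_ok (snd (P f p (P g r (F1,F2))))"
  proof -
    fix f p g r assume a: "(f,p) \<in> osp_gens" "(g,r) \<in> osp_gens"
    have b: "sfun_ok (fst (P g r (F1,F2)))" "sfun_ok (snd (P g r (F1,F2)))" using okP[OF a(2) ok] by auto
    show "sfun_ok (fst (P f p (P g r (F1,F2)))) \<and> sfun_ok (snd (P f p (P g r (F1,F2))))"
      using okP[OF a(1) b] by simp
  qed
  note okPs = okPP[OF gens_mem(1) gens_mem(3)] okPP[OF gens_mem(2) gens_mem(2)]
              okPP[OF gens_mem(4) gens_mem(4)] okPP[OF gens_mem(5) gens_mem(7)]
              okPP[OF gens_mem(6) gens_mem(8)]
  have cs: "fst (P g1 0 (P gx2 0 (F1,F2))) - fst (P gx 0 (P gx 0 (F1,F2))) - fst (P g12 0 (P g12 0 (F1,F2)))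
     - scal 2 (fst (P o1 1 (P ox1 1 (F1,F2)))) - scal 2 (fst (P o2 1 (P ox2 1 (F1,F2))))
     = scal (w - w^2) F1 \<and>
     snd (P g1 0 (P gx2 0 (F1,F2))) - snd (P gx 0 (P gx 0 (F1,F2))) - snd (P g12 0 (P g12 0 (F1,F2)))
     - scal 2 (snd (P o1 1 (P ox1 1 (F1,F2)))) - scal 2 (snd (P o2 1 (P ox2 1 (F1,F2))))
     = scal (w - w^2) F2"
    unfolding P_def w_def by (rule cas_sym[OF ok])
  have "Dl (scal (w - w^2) F1, scal (w - w^2) F2) =
     Dl (P g1 0 (P gx2 0 (F1,F2))) - Dl (P gx 0 (P gx 0 (F1,F2))) - Dl (P g12 0 (P g12 0 (F1,F2)))
     - scal 2 (Dl (P o1 1 (P ox1 1 (F1,F2)))) - scal 2 (Dl (P o2 1 (P ox2 1 (F1,F2))))"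
    unfolding cs[THEN conjunct1, symmetric] cs[THEN conjunct2, symmetric]
    using okPs by (simp add: Dl_diff Dl_scal)
  also have "\<dots> = scal (-(w^2)) (Dl (F1,F2))"
    unfolding step2[OF gens_mem(1) gens_mem(3)] step2[OF gens_mem(2) gens_mem(2)]
      step2[OF gens_mem(4) gens_mem(4)] step2[OF gens_mem(5) gens_mem(7)] step2[OF gens_mem(6) gens_mem(8)]
    by (rule cas_tgt[OF okD])
  finally have e: "scal (w - w^2) (Dl (F1,F2)) = scal (-(w^2)) (Dl (F1,F2))"
    using Dl_scal ok by simp
  have wne: "w \<noteq> 0" using ne w_def by simp
  have "Dl (F1,F2) = 0"
  proof (rule ext, rule ext)
    fix i t
    have "(w - w^2) * Dl (F1,F2) i t = (-(w^2)) * Dl (F1,F2) i t"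
      using fun_cong[OF fun_cong[OF e, of i], of t] by (simp add: scal_def)
    hence "w * Dl (F1,F2) i t = 0" by (simp add: algebra_simps)
    thus "Dl (F1,F2) i t = 0 i t" using wne by simp
  qed
  thus ?thesis unfolding Dl_def by simp
qed




definition evp :: "sfun \<Rightarrow> sfun" where "evp F = mk (c0 F) (\<lambda>t. 0) (\<lambda>t. 0) (c12 F)"
definition odp :: "sfun \<Rightarrow> sfun" where "odp F = mk (\<lambda>t. 0) (c1 F) (c2 F) (\<lambda>t. 0)"

lemma split_par: "F = evp F + odp F"
  by (rule sfun_eqI) (simp_all add: evp_def odp_def)
lemma hom_evp: "hom 0 (evp F)" by (simp add: hom_def evp_def zero_fun_def)
lemma hom_odp: "hom 1 (odp F)" by (simp add: hom_def odp_def zero_fun_def)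
lemma ok_evp: "sfun_ok F \<Longrightarrow> sfun_ok (evp F)" by (simp add: evp_def sfun_ok_comp del: sfun_ok_smooth)
lemma ok_odp: "sfun_ok F \<Longrightarrow> sfun_ok (odp F)" by (simp add: odp_def sfun_ok_comp del: sfun_ok_smooth)

lemma A_split: "diffop A \<Longrightarrow> sfun_ok F \<Longrightarrow> A F = A (evp F) + A (odp F)"
proof -
  assume a: "diffop A" "sfun_ok F"
  have "A F = A (evp F + odp F)" by (simp only: split_par[symmetric])
  also have "\<dots> = A (evp F) + A (odp F)" by (rule diffop_add) (simp_all add: a ok_evp ok_odp)
  finally show ?thesis .
qed

theorem proposition4p1:
  fixes lam mu :: complex
  assumes "mu \<noteq> lam"
  shows "(\<exists>Q. is_quant Q \<and> osp_equivariant lam mu Q \<and>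
            (\<forall>F1 F2 q u. sfun_ok F1 \<and> sfun_ok F2 \<and> hom q F1 \<and> hom q F2 \<and> sfun_ok u \<longrightarrow>
               Q (F1, F2) u = smul F1 (D1 u) + smul F2 (D2 u)
                 + smul (scal ((-1) ^ q * (lam / (lam - mu))) (D1 F1 + D2 F2)) u))
       \<and> (\<forall>Q Q'. is_quant Q \<and> osp_equivariant lam mu Q \<and> is_quant Q' \<and> osp_equivariant lam mu Q' \<longrightarrow>
            (\<forall>F1 F2 u. sfun_ok F1 \<and> sfun_ok F2 \<and> sfun_ok u \<longrightarrow> Q (F1, F2) u = Q' (F1, F2) u))"
proof (intro conjI)
  define d where "d = lam - mu"
  define c where "c = lam / (lam - mu)"
  have dne: "d \<noteq> 0" using assms d_def by simp
  have lm: "lam = c * d" "mu = c * d - d" using dne unfolding c_def d_def by (simp_all add: field_simps)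
  show "\<exists>Q. is_quant Q \<and> osp_equivariant lam mu Q \<and>
            (\<forall>F1 F2 q u. sfun_ok F1 \<and> sfun_ok F2 \<and> hom q F1 \<and> hom q F2 \<and> sfun_ok u \<longrightarrow>
               Q (F1, F2) u = smul F1 (D1 u) + smul F2 (D2 u)
                 + smul (scal ((-1) ^ q * (lam / (lam - mu))) (D1 F1 + D2 F2)) u)"
  proof (intro exI[of _ "Qc c"] conjI)
    show "is_quant (Qc c)" by (rule quant_Qc)
    show "osp_equivariant lam mu (Qc c)"
      unfolding osp_equivariant_def lm using exist_equiv by blast
    show "\<forall>F1 F2 q u. sfun_ok F1 \<and> sfun_ok F2 \<and> hom q F1 \<and> hom q F2 \<and> sfun_ok u \<longrightarrow>
               Qc c (F1, F2) u = smul F1 (D1 u) + smul F2 (D2 u)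
                 + smul (scal ((-1) ^ q * (lam / (lam - mu))) (D1 F1 + D2 F2)) u"
    proof (intro allI impI)
      fix F1 F2 q u assume a: "sfun_ok F1 \<and> sfun_ok F2 \<and> hom q F1 \<and> hom q F2 \<and> sfun_ok u"
      have "scal c (D1 (par F1) + D2 (par F2)) = scal ((-1)^q * c) (D1 F1 + D2 F2)"
        by (rule formula_Qc) (use a in auto)
      thus "Qc c (F1, F2) u = smul F1 (D1 u) + smul F2 (D2 u)
                 + smul (scal ((-1) ^ q * (lam / (lam - mu))) (D1 F1 + D2 F2)) u"
        unfolding Qc_def c_def by simp
    qed
  qed
  show "\<forall>Q Q'. is_quant Q \<and> osp_equivariant lam mu Q \<and> is_quant Q' \<and> osp_equivariant lam mu Q' \<longrightarrow>
            (\<forall>F1 F2 u. sfun_ok F1 \<and> sfun_ok F2 \<and> sfun_ok u \<longrightarrow> Q (F1, F2) u = Q' (F1, F2) u)"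
  proof (intro allI impI)
    fix Q Q' F1 F2 u
    assume H: "is_quant Q \<and> osp_equivariant lam mu Q \<and> is_quant Q' \<and> osp_equivariant lam mu Q'"
      and ok: "sfun_ok F1 \<and> sfun_ok F2 \<and> sfun_ok u"
    obtain A1 A2 where dA: "diffop A1" "diffop A2" and qA: "\<forall>F1 F2 u. sfun_ok F1 \<and> sfun_ok F2 \<and> sfun_ok u \<longrightarrow>
        Q (F1, F2) u = smul F1 (D1 u) + smul F2 (D2 u) + smul (A1 F1 + A2 F2) u"
      using H unfolding is_quant_def by blast
    obtain B1 B2 where dB: "diffop B1" "diffop B2" and qB: "\<forall>F1 F2 u. sfun_ok F1 \<and> sfun_ok F2 \<and> sfun_ok u \<longrightarrow>
        Q' (F1, F2) u = smul F1 (D1 u) + smul F2 (D2 u) + smul (B1 F1 + B2 F2) u"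
      using H unfolding is_quant_def by blast
    have e0: "A1 (evp F1) + A2 (evp F2) = B1 (evp F1) + B2 (evp F2)"
      by (rule uniq_hom[OF assms qA dA _ qB dB _ hom_evp hom_evp]) (use H ok ok_evp in auto)
    have e1: "A1 (odp F1) + A2 (odp F2) = B1 (odp F1) + B2 (odp F2)"
      by (rule uniq_hom[OF assms qA dA _ qB dB _ hom_odp hom_odp]) (use H ok ok_odp in auto)
    have "A1 F1 + A2 F2 = B1 F1 + B2 F2"
    proof -
      have "A1 F1 + A2 F2 = (A1 (evp F1) + A2 (evp F2)) + (A1 (odp F1) + A2 (odp F2))"
        using A_split[OF dA(1), of F1] A_split[OF dA(2), of F2] ok by (simp add: algebra_simps)
      also have "\<dots> = (B1 (evp F1) + B2 (evp F2)) + (B1 (odp F1) + B2 (odp F2))" using e0 e1 by simp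
      also have "\<dots> = B1 F1 + B2 F2"
        using A_split[OF dB(1), of F1] A_split[OF dB(2), of F2] ok by (simp add: algebra_simps)
      finally show ?thesis .
    qed
    thus "Q (F1, F2) u = Q' (F1, F2) u" using qA qB ok by simp
  qed
qed


end
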